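(* Let $n$ be a natural number and let $h=F_{6n-1}$, $k=F_{6n+1}$, where $F_m$ is the $m$-th Fibonacci number. Suppose $h,k$ are positive integers with $\gcd(h,k)=1$ and $\{h,k\}$ is a symmetric pair. Then $$kB_{1}(h,k)+hB_{1}(k,h)=\frac{h^{2}-h-k+k^{2}}{2}-hk+1.$$
   Context: The Fibonacci numbers are given by $F_0=0$, $F_1=1$, $F_{m+1}=F_m+F_{m-1}$ (equivalently $\frac{x}{1-x-x^2}=\sum_{m\ge0}F_mx^m$). $[x]$ denotes the greatest integer $\le x$, and $((x))=x-[x]-\tfrac12$ if $x\notin\mathbb{Z}$, $((x))=0$ if $x\in\mathbb{Z}$. The Dedekind sum is $s(a,b)=\sum_{j=1}^{b-1}\left(\left(\frac{aj}{b}\right)\right)\left(\left(\frac{j}{b}\right)\right)$ for integers $a$ and $b>0$; a pair $\{h,k\}$ of positive integers is called a symmetric pair if $s(h,k)=s(k,h)$. For coprime positive integers $a,b$, $$B_{1}(a,b)=\sum_{j=1}^{b-1}(-1)^{j+\left[\frac{aj}{b}\right]}\left[\frac{aj}{b}\right].$$ *)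

theory Defs
  imports Complex_Main "HOL-Number_Theory.Fib"
begin

definition sawtooth :: "real \<Rightarrow> real" where
  "sawtooth x = (if x \<in> \<int> then 0 else x - of_int \<lfloor>x\<rfloor> - 1/2)"

definition dedekind_sum :: "int \<Rightarrow> int \<Rightarrow> real" where
  "dedekind_sum a b =
     (\<Sum>j\<in>{1..b-1}. sawtooth (of_int (a*j) / of_int b) * sawtooth (of_int j / of_int b))"

definition B1 :: "int \<Rightarrow> int \<Rightarrow> int" where
  "B1 a b = (\<Sum>j\<in>{1..b-1}.
      (let q = \<lfloor>of_int (a*j) / (of_int b :: real)\<rfloor> in
        (if even (j + q) then 1 else -1) * q))"

end

theory Submission
  imports Defs
begin

definition sg :: "int \<Rightarrow> int" where "sg x = (if even x then 1 else -1)"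

lemma sg_add: "sg (a + b) = sg a * sg b"
  by (auto simp: sg_def)

lemma sg_neg: "sg (- a) = sg a" by (simp add: sg_def)
lemma sg_diff: "sg (a - b) = sg a * sg b"
  using sg_add[of a "-b"] by (simp add: sg_neg)

lemma alt_sum0: "(\<Sum>j\<in>{1..2*int m}. sg j) = 0"
proof (induction m)
  case 0 then show ?case by simp
next
  case (Suc m)
  have e: "{1..2*int (Suc m)} = insert (2*int m+2) (insert (2*int m+1) {1..2*int m})" by auto
  show ?case unfolding e using Suc by (simp add: sg_def)
qed

lemma alt_sum1: "(\<Sum>j\<in>{1..2*int m}. sg j * j) = int m"
proof (induction m)
  case 0 then show ?case by simp
next
  case (Suc m)
  have e: "{1..2*int (Suc m)} = insert (2*int m+2) (insert (2*int m+1) {1..2*int m})" by auto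
  show ?case unfolding e using Suc by (simp add: sg_def)
qed

lemma alt_sum2: "(\<Sum>j\<in>{0..2*int m+1}. sg j * j) = - int m - 1"
proof (induction m)
  case 0
  have e: "{0..2*int 0+1} = {0,1::int}" by auto
  show ?case unfolding e by (simp add: sg_def)
next
  case (Suc m)
  have e: "{0..2*int (Suc m)+1} = insert (2*int m+3) (insert (2*int m+2) {0..2*int m+1})" by auto
  show ?case unfolding e using Suc by (simp add: sg_def)
qed

lemma odd_form: "odd (k::int) \<Longrightarrow> k > 0 \<Longrightarrow> \<exists>m. k - 1 = 2 * int m"
proof -
  assume a: "odd k" "k > 0"
  have "even (k - 1)" using a by simp
  then obtain c where c: "k - 1 = 2 * c" by (rule evenE)
  with a have "c \<ge> 0" by simp
  then obtain m where "c = int m" using nonneg_int_cases by blast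
  then show ?thesis using c by blast
qed

lemma alt0: "odd (k::int) \<Longrightarrow> k > 0 \<Longrightarrow> (\<Sum>j\<in>{1..k-1}. sg j) = 0"
proof -
  assume "odd k" "k > 0"
  then obtain m where "k - 1 = 2 * int m" using odd_form by blast
  then show ?thesis using alt_sum0[of m] by simp
qed

lemma alt1: "odd (k::int) \<Longrightarrow> k > 0 \<Longrightarrow> 2 * (\<Sum>j\<in>{1..k-1}. sg j * j) = k - 1"
proof -
  assume "odd k" "k > 0"
  then obtain m where "k - 1 = 2 * int m" using odd_form by blast
  then show ?thesis using alt_sum1[of m] by simp
qed

lemma alt2': "odd (N::int) \<Longrightarrow> N > 0 \<Longrightarrow> 2 * (\<Sum>j\<in>{0..N}. sg j * j) = - N - 1"
proof -
  assume "odd N" "N > 0"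
  then obtain m where "N - 1 = 2 * int m" using odd_form by blast
  then have "N = 2 * int m + 1" by simp
  then show ?thesis using alt_sum2[of m] by simp
qed


lemma alt2: "odd (N::int) \<Longrightarrow> N \<ge> -1 \<Longrightarrow> 2 * (\<Sum>j\<in>{0..N}. sg j * j) = - N - 1"
proof -
  assume "odd N" "N \<ge> -1"
  show ?thesis
  proof (cases "N = -1")
    case True
    then have "{0..N} = {}" by simp
    then show ?thesis using True by simp
  next
    case False
    have "N \<noteq> 0"
    proof
      assume "N = 0"
      then show False using \<open>odd N\<close> by simp
    qed
    then have "N > 0" using False \<open>N \<ge> -1\<close> by linarith
    then show ?thesis by (rule alt2'[OF \<open>odd N\<close>])
  qed
qed

lemma dvd_small: "(k::int) > 0 \<Longrightarrow> k dvd x \<Longrightarrow> \<bar>x\<bar> < k \<Longrightarrow> x = 0"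
proof -
  assume a: "k > 0" "k dvd x" "\<bar>x\<bar> < k"
  then obtain c where c: "x = k * c" by (auto simp: dvd_def)
  have ax: "\<bar>x\<bar> = k * \<bar>c\<bar>" using c a by (simp add: abs_mult)
  show "x = 0"
  proof (rule ccontr)
    assume "x \<noteq> 0"
    then have "\<bar>c\<bar> \<ge> 1" using c by auto
    then have "k * \<bar>c\<bar> \<ge> k * 1" using a by (intro mult_left_mono) auto
    then show False using ax a by simp
  qed
qed

lemma le_div_int: "(k::int) > 0 \<Longrightarrow> i \<le> x div k \<longleftrightarrow> i * k \<le> x"
proof -
  assume k: "k > 0"
  have d: "x = (x div k) * k + x mod k" by simp
  have m: "0 \<le> x mod k" "x mod k < k" using k by auto
  show ?thesis
  proof
    assume "i \<le> x div k"
    then have "i * k \<le> (x div k) * k" using k by (intro mult_right_mono) auto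
    then show "i * k \<le> x" using d m by linarith
  next
    assume a: "i * k \<le> x"
    show "i \<le> x div k"
    proof (rule ccontr)
      assume "\<not> i \<le> x div k"
      then have "(x div k + 1) * k \<le> i * k" using k by (intro mult_right_mono) auto
      then have "(x div k) * k + k \<le> i * k" by (simp add: algebra_simps)
      then show False using a d m by linarith
    qed
  qed
qed

lemma sgq_nat: "sg (int m) = 1 + 2 * (\<Sum>i\<in>{1..int m}. sg i)"
proof (induction m)
  case 0 then show ?case by (simp add: sg_def)
next
  case (Suc m)
  have e: "{1..int (Suc m)} = insert (int m + 1) {1..int m}" by auto
  have s: "sg (int m + 1) = - sg (int m)" by (simp add: sg_def)
  have s2: "sg (int (Suc m)) = - sg (int m)" by (simp add: sg_def)
  have ins: "(\<Sum>i\<in>{1..int (Suc m)}. sg i) = sg (int m + 1) + (\<Sum>i\<in>{1..int m}. sg i)"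
    unfolding e by simp
  show ?case using Suc s s2 ins by linarith
qed

lemma sgq: "(q::int) \<ge> 0 \<Longrightarrow> sg q = 1 + 2 * (\<Sum>i\<in>{1..q}. sg i)"
proof -
  assume "q \<ge> 0"
  then obtain m where "q = int m" using nonneg_int_cases by blast
  then show ?thesis using sgq_nat[of m] by simp
qed

locale oddpair =
  fixes h k :: int
  assumes hpos: "h > 0" and kpos: "k > 0" and hodd: "odd h" and kodd: "odd k"
    and cop: "coprime h k"
begin

definition "R = {1..k-1} \<times> {1..h-1}"
definition "L = {p\<in>R. k * snd p < h * fst p}"
definition "L' = {p\<in>R. h * fst p < k * snd p}"

lemma kdvd: "k dvd h * y \<Longrightarrow> k dvd y"
  using coprime_dvd_mult_right_iff[of k h y] cop by (simp add: coprime_commute)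

lemma hdvd: "h dvd k * y \<Longrightarrow> h dvd y"
  using coprime_dvd_mult_right_iff[of h k y] cop by simp

lemma noteq: "j \<in> {1..k-1} \<Longrightarrow> h * j \<noteq> k * i"
proof
  assume j: "j \<in> {1..k-1}" and e: "h * j = k * i"
  then have "k dvd h * j" by simp
  then have "k dvd j" by (rule kdvd)
  then have "j = 0" using dvd_small[of k j] j kpos by auto
  then show False using j by simp
qed

lemma finR: "finite R" by (simp add: R_def)
lemma finL: "finite L" using finR by (simp add: L_def)
lemma finL': "finite L'" using finR by (simp add: L'_def)

lemma R_split: "R = L \<union> L'" "L \<inter> L' = {}"
proof -
  show "R = L \<union> L'"
  proof
    show "R \<subseteq> L \<union> L'"
    proof
      fix p assume p: "p \<in> R"
      obtain j i where pe: "p = (j,i)" by (cases p)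
      have "h * j \<noteq> k * i" using p pe noteq by (auto simp: R_def)
      then show "p \<in> L \<union> L'" using p pe by (auto simp: L_def L'_def)
    qed
  qed (auto simp: L_def L'_def)
  show "L \<inter> L' = {}" by (auto simp: L_def L'_def)
qed

definition "refl_pt p = (k - fst p, h - snd p)"

lemma refl_bij: "bij_betw refl_pt L L'"
proof (rule bij_betw_byWitness[where f' = refl_pt])
  show "\<forall>a\<in>L. refl_pt (refl_pt a) = a" by (auto simp: refl_pt_def)
  show "\<forall>a\<in>L'. refl_pt (refl_pt a) = a" by (auto simp: refl_pt_def)
  show "refl_pt ` L \<subseteq> L'"
  proof
    fix q assume "q \<in> refl_pt ` L"
    then obtain j i where ji: "(j,i) \<in> L" "q = (k - j, h - i)" by (auto simp: refl_pt_def)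
    then have "k*i < h*j" "j\<in>{1..k-1}" "i \<in> {1..h-1}" by (auto simp: L_def R_def)
    moreover have "h * (k - j) < k * (h - i)" using \<open>k*i < h*j\<close> by (simp add: algebra_simps)
    ultimately show "q \<in> L'" using ji by (auto simp: L'_def R_def)
  qed
  show "refl_pt ` L' \<subseteq> L"
  proof
    fix q assume "q \<in> refl_pt ` L'"
    then obtain j i where ji: "(j,i) \<in> L'" "q = (k - j, h - i)" by (auto simp: refl_pt_def)
    then have "h*j < k*i" "j\<in>{1..k-1}" "i \<in> {1..h-1}" by (auto simp: L'_def R_def)
    moreover have "k * (h - i) < h * (k - j)" using \<open>h*j < k*i\<close> by (simp add: algebra_simps)
    ultimately show "q \<in> L" using ji by (auto simp: L_def R_def)
  qed
qed

lemma card_L: "2 * int (card L) = (k - 1) * (h - 1)"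
proof -
  have "card R = card L + card L'" unfolding R_split(1) by (rule card_Un_disjoint[OF finL finL' R_split(2)])
  moreover have "card L' = card L" using bij_betw_same_card[OF refl_bij] by simp
  moreover have "int (card R) = (k - 1) * (h - 1)" using hpos kpos by (simp add: R_def card_cartesian_product)
  ultimately show ?thesis by simp
qed

lemma prod_sum: fixes f g :: "int \<Rightarrow> int" shows "(\<Sum>(j,i)\<in>R. f j * g i) = (\<Sum>j\<in>{1..k-1}. f j) * (\<Sum>i\<in>{1..h-1}. g i)"
  unfolding R_def sum.cartesian_product[symmetric] by (simp add: sum_product)

lemma sumR0: "(\<Sum>(j,i)\<in>R. sg (j + i)) = 0"
proof -
  have "(\<Sum>(j,i)\<in>R. sg (j + i)) = (\<Sum>(j,i)\<in>R. sg j * sg i)" by (simp add: sg_add)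
  also have "\<dots> = (\<Sum>j\<in>{1..k-1}. sg j) * (\<Sum>i\<in>{1..h-1}. sg i)" by (rule prod_sum)
  also have "\<dots> = 0" using alt0 kodd kpos by simp
  finally show ?thesis .
qed

lemma sumR1: "(\<Sum>(j,i)\<in>R. sg (j + i) * (k * i)) = 0"
proof -
  have "(\<Sum>(j,i)\<in>R. sg (j + i) * (k * i)) = (\<Sum>(j,i)\<in>R. sg j * (k * sg i * i))" by (simp add: sg_add algebra_simps)
  also have "\<dots> = (\<Sum>j\<in>{1..k-1}. sg j) * (\<Sum>i\<in>{1..h-1}. k * sg i * i)" by (rule prod_sum)
  also have "\<dots> = 0" using alt0 kodd kpos by simp
  finally show ?thesis .
qed

lemma sumL0: "(\<Sum>(j,i)\<in>L. sg (j + i)) = 0"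
proof -
  have "(\<Sum>(j,i)\<in>L'. sg (j + i)) = (\<Sum>p\<in>L. (\<lambda>(j,i). sg (j + i)) (refl_pt p))"
    by (rule sum.reindex_bij_betw[OF refl_bij, symmetric])
  also have "\<dots> = (\<Sum>(j,i)\<in>L. sg (j + i))"
  proof (rule sum.cong)
    fix p assume "p \<in> L"
    have "even (k + h)" using hodd kodd by simp
    then show "(\<lambda>(j,i). sg (j + i)) (refl_pt p) = (\<lambda>(j,i). sg (j + i)) p"
      by (cases p) (auto simp: refl_pt_def sg_def)
  qed simp
  finally have e: "(\<Sum>(j,i)\<in>L'. sg (j + i)) = (\<Sum>(j,i)\<in>L. sg (j + i))" .
  have "(\<Sum>(j,i)\<in>R. sg (j + i)) = (\<Sum>(j,i)\<in>L. sg (j + i)) + (\<Sum>(j,i)\<in>L'. sg (j + i))"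
    unfolding R_split(1) by (rule sum.union_disjoint[OF finL finL' R_split(2)])
  then show ?thesis using e sumR0 by simp
qed

definition "tv p = h * fst p - k * snd p"
definition "NN = h * k - h - k"

lemma tv_inj: "inj_on tv R"
proof
  fix p q assume p: "p \<in> R" and q: "q \<in> R" and e: "tv p = tv q"
  obtain j i where pe: "p = (j,i)" by (cases p)
  obtain j' i' where qe: "q = (j',i')" by (cases q)
  have "h * (j - j') = k * (i - i')" using e pe qe by (simp add: tv_def algebra_simps)
  then have "k dvd h * (j - j')" by simp
  then have "k dvd (j - j')" by (rule kdvd)
  moreover have "\<bar>j - j'\<bar> < k" using p q pe qe by (auto simp: R_def)
  ultimately have "j - j' = 0" using dvd_small kpos by blast
  then have "j = j'" by simp
  then have "k * (i - i') = 0" using \<open>h * (j - j') = k * (i - i')\<close> by simp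
  then have "i = i'" using kpos by simp
  then show "p = q" using pe qe \<open>j = j'\<close> by simp
qed

lemma tv_range: "p \<in> L \<Longrightarrow> tv p \<in> {1..NN}"
proof -
  assume p: "p \<in> L"
  obtain j i where pe: "p = (j,i)" by (cases p)
  have a: "k*i < h*j" "1 \<le> j" "j \<le> k-1" "1 \<le> i" "i \<le> h-1" using p pe by (auto simp: L_def R_def)
  have "h * j \<le> h * (k - 1)" using a hpos by (intro mult_left_mono) auto
  moreover have "k * 1 \<le> k * i" using a kpos by (intro mult_left_mono) auto
  moreover have "h * (k - 1) = h * k - h" by (simp add: algebra_simps)
  ultimately have "1 \<le> h * j - k * i" "h * j - k * i \<le> h * k - h - k" using a by linarith+
  then show ?thesis using pe by (simp add: tv_def NN_def)
qed

lemma tv_par: "sg (tv p) = sg (fst p + snd p)"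
  using hodd kodd by (auto simp: tv_def sg_def)

lemma NN_odd: "odd NN" using hodd kodd by (simp add: NN_def)

lemma disj: "p \<in> L \<Longrightarrow> q \<in> L \<Longrightarrow> tv p \<noteq> NN - tv q"
proof
  assume p: "p \<in> L" and q: "q \<in> L" and e: "tv p = NN - tv q"
  obtain j i where pe: "p = (j,i)" by (cases p)
  obtain j' i' where qe: "q = (j',i')" by (cases q)
  have a: "1 \<le> j" "j \<le> k-1" "1 \<le> i" "1 \<le> j'" "j' \<le> k-1" "1 \<le> i'"
    using p q pe qe by (auto simp: L_def R_def)
  have "h * (j + j' + 1 - k) = k * (i + i' - 1)" using e pe qe by (simp add: tv_def NN_def algebra_simps)
  then have "k dvd h * (j + j' + 1 - k)" by simp
  then have "k dvd (j + j' + 1 - k)" by (rule kdvd)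
  moreover have "\<bar>j + j' + 1 - k\<bar> < k" using a by auto
  ultimately have "j + j' + 1 - k = 0" using dvd_small kpos by blast
  then have "k * (i + i' - 1) = 0" using \<open>h * (j + j' + 1 - k) = k * (i + i' - 1)\<close> by simp
  then show False using kpos a by simp
qed

lemma X_val: "4 * (\<Sum>p\<in>L. sg (fst p + snd p) * tv p) = - (h - 1) * (k - 1)"
proof -
  define A where "A = tv ` L"
  define B where "B = (\<lambda>s. NN - s) ` A"
  have injL: "inj_on tv L" using tv_inj by (rule inj_on_subset) (auto simp: L_def)
  have cA: "card A = card L" unfolding A_def using injL card_image by blast
  have injB: "inj_on (\<lambda>s. NN - s) A" by (auto simp: inj_on_def)
  have cB: "card B = card A" unfolding B_def using injB card_image by blast
  have finA: "finite A" using finL by (simp add: A_def)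
  have finB: "finite B" using finA by (simp add: B_def)
  have AB: "A \<inter> B = {}" using disj by (auto simp: A_def B_def)
  have sub: "A \<union> B \<subseteq> {0..NN}" using tv_range by (force simp: A_def B_def)
  have NNge: "NN \<ge> -1"
  proof -
    have "(k - 1) * (h - 1) \<ge> 0" using hpos kpos by simp
    then show ?thesis by (simp add: NN_def algebra_simps)
  qed
  have "int (card (A \<union> B)) = 2 * int (card L)" using card_Un_disjoint[OF finA finB AB] cA cB by simp
  also have "\<dots> = (k - 1) * (h - 1)" by (rule card_L)
  also have "\<dots> = NN + 1" by (simp add: NN_def algebra_simps)
  also have "\<dots> = int (card {0..NN})" using NNge by simp
  finally have "int (card (A \<union> B)) = int (card {0..NN})" .
  then have "card (A \<union> B) = card {0..NN}" by (simp only: of_nat_eq_iff)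
  then have ABeq: "A \<union> B = {0..NN}" using sub by (intro card_subset_eq) auto
  have "- NN - 1 = 2 * (\<Sum>s\<in>{0..NN}. sg s * s)" using alt2 NN_odd NNge by simp
  also have "(\<Sum>s\<in>{0..NN}. sg s * s) = (\<Sum>s\<in>A. sg s * s) + (\<Sum>s\<in>B. sg s * s)"
    using ABeq sum.union_disjoint[OF finA finB AB] by simp
  also have "(\<Sum>s\<in>B. sg s * s) = (\<Sum>s\<in>A. sg (NN - s) * (NN - s))"
    unfolding B_def using sum.reindex[OF injB] by simp
  also have "\<dots> = (\<Sum>s\<in>A. sg s * s) - NN * (\<Sum>s\<in>A. sg s)"
  proof -
    have "sg NN = -1" using NN_odd by (simp add: sg_def)
    then have "(\<Sum>s\<in>A. sg (NN - s) * (NN - s)) = (\<Sum>s\<in>A. sg s * s - NN * sg s)"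
      by (intro sum.cong) (auto simp: sg_diff algebra_simps)
    then show ?thesis by (simp add: sum_subtractf sum_distrib_left)
  qed
  also have "(\<Sum>s\<in>A. sg s) = (\<Sum>p\<in>L. sg (fst p + snd p))"
    unfolding A_def sum.reindex[OF injL] by (simp add: comp_def tv_par)
  also have "\<dots> = 0" using sumL0 by (simp add: case_prod_beta')
  also have "(\<Sum>s\<in>A. sg s * s) = (\<Sum>p\<in>L. sg (fst p + snd p) * tv p)"
    unfolding A_def sum.reindex[OF injL] by (simp add: comp_def tv_par)
  finally show ?thesis by (simp add: NN_def algebra_simps)
qed


end

context oddpair begin

definition "T = (\<Sum>j\<in>{1..k-1}. sg (j + (h*j) div k) * j)"
definition "BB = (\<Sum>j\<in>{1..k-1}. sg (j + (h*j) div k) * ((h*j) div k))"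

lemma col: "j \<in> {1..k-1} \<Longrightarrow> {1..(h*j) div k} = {i\<in>{1..h-1}. k*i < h*j}"
proof -
  assume j: "j \<in> {1..k-1}"
  have hk: "h*j < h*k" using j hpos by (intro mult_strict_left_mono) auto
  show ?thesis
  proof (intro set_eqI iffI)
    fix i assume "i \<in> {1..(h*j) div k}"
    then have i: "1 \<le> i" "i * k \<le> h * j" using le_div_int kpos by auto
    moreover have "h * j \<noteq> k * i" using noteq j by blast
    ultimately have lt: "k * i < h * j" by (simp add: algebra_simps)
    then have "k * i < k * h" using hk by (simp add: algebra_simps)
    then have "i < h" using kpos by simp
    then show "i \<in> {i\<in>{1..h-1}. k*i < h*j}" using i lt by auto
  next
    fix i assume "i \<in> {i\<in>{1..h-1}. k*i < h*j}"
    then have "1 \<le> i" "i * k \<le> h * j" by (auto simp: algebra_simps)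
    then show "i \<in> {1..(h*j) div k}" using le_div_int kpos by auto
  qed
qed

lemma L_sum: "(\<Sum>p\<in>L. sg (fst p + snd p) * fst p)
   = (\<Sum>j\<in>{1..k-1}. \<Sum>i\<in>{i\<in>{1..h-1}. k*i < h*j}. sg (j + i) * j)"
proof -
  have "(\<Sum>p\<in>L. sg (fst p + snd p) * fst p)
     = (\<Sum>p\<in>{1..k-1} \<times> {1..h-1}. if k * snd p < h * fst p then sg (fst p + snd p) * fst p else 0)"
    unfolding L_def R_def by (rule sum.inter_filter) simp
  also have "\<dots> = (\<Sum>j\<in>{1..k-1}. \<Sum>i\<in>{1..h-1}. if k * i < h * j then sg (j + i) * j else 0)"
    by (simp only: sum.cartesian_product' fst_conv snd_conv)
  also have "\<dots> = (\<Sum>j\<in>{1..k-1}. \<Sum>i\<in>{i\<in>{1..h-1}. k*i < h*j}. sg (j + i) * j)"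
    by (rule sum.cong[OF refl], rule sum.inter_filter[symmetric]) simp
  finally show ?thesis .
qed

lemma T_lattice: "T = (\<Sum>j\<in>{1..k-1}. sg j * j) + 2 * (\<Sum>p\<in>L. sg (fst p + snd p) * fst p)"
proof -
  have "T = (\<Sum>j\<in>{1..k-1}. sg j * j + 2 * (\<Sum>i\<in>{i\<in>{1..h-1}. k*i < h*j}. sg (j + i) * j))"
    unfolding T_def
  proof (rule sum.cong)
    fix j assume j: "j \<in> {1..k-1}"
    have q0: "(h*j) div k \<ge> 0" using j hpos kpos by (simp add: pos_imp_zdiv_nonneg_iff)
    have "sg (j + (h*j) div k) * j = sg j * j * sg ((h*j) div k)" by (simp add: sg_add)
    also have "\<dots> = sg j * j * (1 + 2 * (\<Sum>i\<in>{1..(h*j) div k}. sg i))" using sgq[OF q0] by simp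
    also have "\<dots> = sg j * j + 2 * (\<Sum>i\<in>{1..(h*j) div k}. sg (j + i) * j)"
      by (simp add: sum_distrib_left sg_add algebra_simps)
    finally show "sg (j + (h*j) div k) * j = sg j * j + 2 * (\<Sum>i\<in>{i\<in>{1..h-1}. k*i < h*j}. sg (j + i) * j)"
      using col[OF j] by simp
  qed simp
  also have "\<dots> = (\<Sum>j\<in>{1..k-1}. sg j * j) + 2 * (\<Sum>j\<in>{1..k-1}. \<Sum>i\<in>{i\<in>{1..h-1}. k*i < h*j}. sg (j + i) * j)"
    by (simp add: sum.distrib sum_distrib_left)
  finally show ?thesis using L_sum by simp
qed

lemma mod_perm: "(\<lambda>j. (h*j) mod k) ` {1..k-1} = {1..k-1}"
proof (rule endo_inj_surj)
  show "(\<lambda>j. (h*j) mod k) ` {1..k-1} \<subseteq> {1..k-1}"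
  proof
    fix r assume "r \<in> (\<lambda>j. (h*j) mod k) ` {1..k-1}"
    then obtain j where j: "j \<in> {1..k-1}" "r = (h*j) mod k" by auto
    have "(h*j) mod k \<noteq> 0"
    proof
      assume "(h*j) mod k = 0"
      then have "k dvd h * j" by (simp add: dvd_eq_mod_eq_0)
      then have "k dvd j" by (rule kdvd)
      then have "j = 0" using dvd_small[of k j] j kpos by auto
      then show False using j by simp
    qed
    moreover have "0 \<le> (h*j) mod k" "(h*j) mod k < k" using kpos by auto
    ultimately have "1 \<le> r" "r \<le> k - 1" using j by linarith+
    then show "r \<in> {1..k-1}" by simp
  qed
  show "inj_on (\<lambda>j. (h*j) mod k) {1..k-1}"
  proof
    fix j j' assume j: "j \<in> {1..k-1}" and j': "j' \<in> {1..k-1}" and e: "(h*j) mod k = (h*j') mod k"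
    then have "k dvd h*j - h*j'" by (simp add: mod_eq_dvd_iff)
    then have "k dvd h*(j - j')" by (simp add: algebra_simps)
    then have "k dvd (j - j')" by (rule kdvd)
    moreover have "\<bar>j - j'\<bar> < k" using j j' by auto
    ultimately have "j - j' = 0" using dvd_small kpos by blast
    then show "j = j'" by simp
  qed
qed simp

lemma sg_mod: "sg (j + (h*j) div k) = sg ((h*j) mod k)"
proof -
  have e: "(h*j) mod k = h*j - k*((h*j) div k)" using mult_div_mod_eq[of k "h*j"] by linarith
  show ?thesis unfolding e using hodd kodd by (simp add: sg_def)
qed

lemma ring_aux: "(a::int) * (b * c + d) = b * (a * c) + a * d"
  by (simp add: algebra_simps)

lemma BB_form: "2 * (k * BB) = 2 * (h * T) - (k - 1)"
proof -
  have inj: "inj_on (\<lambda>j. (h*j) mod k) {1..k-1}"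
    using mod_perm by (simp add: eq_card_imp_inj_on)
  have "h * T = (\<Sum>j\<in>{1..k-1}. h * (sg (j + (h*j) div k) * j))"
    unfolding T_def by (rule sum_distrib_left)
  also have "\<dots> = (\<Sum>j\<in>{1..k-1}. k * (sg (j + (h*j) div k) * ((h*j) div k)) + sg ((h*j) mod k) * ((h*j) mod k))"
  proof (rule sum.cong)
    fix j
    have e: "h * j = k * ((h*j) div k) + (h*j) mod k" using mult_div_mod_eq[of k "h*j"] by simp
    have "h * (sg (j + (h*j) div k) * j) = sg (j + (h*j) div k) * (h * j)" by simp
    also have "\<dots> = sg (j + (h*j) div k) * (k * ((h*j) div k) + (h*j) mod k)" using e by simp
    also have "\<dots> = k * (sg (j + (h*j) div k) * ((h*j) div k)) + sg ((h*j) mod k) * ((h*j) mod k)"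
      unfolding sg_mod by (rule ring_aux)
    finally show "h * (sg (j + (h*j) div k) * j) = k * (sg (j + (h*j) div k) * ((h*j) div k)) + sg ((h*j) mod k) * ((h*j) mod k)" .
  qed simp
  also have "\<dots> = k * BB + (\<Sum>j\<in>{1..k-1}. sg ((h*j) mod k) * ((h*j) mod k))"
    unfolding BB_def by (simp only: sum.distrib sum_distrib_left)
  also have "(\<Sum>j\<in>{1..k-1}. sg ((h*j) mod k) * ((h*j) mod k)) = (\<Sum>r\<in>{1..k-1}. sg r * r)"
    using sum.reindex[OF inj, of "\<lambda>r. sg r * r"] mod_perm by simp
  finally have "h * T = k * BB + (\<Sum>r\<in>{1..k-1}. sg r * r)" .
  then show ?thesis using alt1 kodd kpos by simp
qed

lemma oddpair_swap: "oddpair k h"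
  unfolding oddpair_def using hpos kpos hodd kodd cop by (auto simp: coprime_commute)

end

lemma (in oddpair) swapL: "oddpair.L k h = prod.swap ` L'"
proof (intro set_eqI iffI)
  fix p assume "p \<in> oddpair.L k h"
  then have sp: "prod.swap p \<in> L'" by (cases p) (auto simp: oddpair.L_def[OF oddpair_swap] oddpair.R_def[OF oddpair_swap] L'_def R_def)
  show "p \<in> prod.swap ` L'" by (rule image_eqI[where x="prod.swap p"]) (simp_all add: sp)
next
  fix p assume "p \<in> prod.swap ` L'"
  then show "p \<in> oddpair.L k h" by (auto simp: oddpair.L_def[OF oddpair_swap] oddpair.R_def[OF oddpair_swap] L'_def R_def)
qed

context oddpair begin

lemma T_swap: "oddpair.T k h = (\<Sum>i\<in>{1..h-1}. sg i * i) + 2 * (\<Sum>p\<in>L'. sg (fst p + snd p) * snd p)"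
proof -
  have "oddpair.T k h = (\<Sum>j\<in>{1..h-1}. sg j * j) + 2 * (\<Sum>p\<in>oddpair.L k h. sg (fst p + snd p) * fst p)"
    by (rule oddpair.T_lattice[OF oddpair_swap])
  also have "(\<Sum>p\<in>oddpair.L k h. sg (fst p + snd p) * fst p) = (\<Sum>p\<in>L'. sg (fst p + snd p) * snd p)"
    unfolding swapL by (subst sum.reindex) (auto simp: add.commute swap_inj_on)
  finally show ?thesis .
qed

lemma recip: "2 * (h * T + k * oddpair.T k h) = h * k - 1"
proof -
  define Ak where "Ak = (\<Sum>j\<in>{1..k-1}. sg j * j)"
  define Ah where "Ah = (\<Sum>i\<in>{1..h-1}. sg i * i)"
  define P where "P = (\<Sum>p\<in>L. sg (fst p + snd p) * fst p)"
  define Q where "Q = (\<Sum>p\<in>L'. sg (fst p + snd p) * snd p)"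
  define U where "U = (\<Sum>p\<in>L. sg (fst p + snd p) * (h * fst p))"
  define V where "V = (\<Sum>p\<in>L. sg (fst p + snd p) * (k * snd p))"
  define V' where "V' = (\<Sum>p\<in>L'. sg (fst p + snd p) * (k * snd p))"
  have T1: "T = Ak + 2 * P" unfolding Ak_def P_def by (rule T_lattice)
  have T2: "oddpair.T k h = Ah + 2 * Q" unfolding Ah_def Q_def by (rule T_swap)
  have A1: "2 * Ak = k - 1" unfolding Ak_def using alt1 kodd kpos by simp
  have A2: "2 * Ah = h - 1" unfolding Ah_def using alt1 hodd hpos by simp
  have hP: "h * P = U" unfolding P_def U_def by (simp add: sum_distrib_left algebra_simps)
  have kQ: "k * Q = V'" unfolding Q_def V'_def by (simp add: sum_distrib_left algebra_simps)
  have R0: "(\<Sum>p\<in>R. sg (fst p + snd p) * (k * snd p)) = 0" using sumR1 by (simp add: case_prod_beta')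
  have "(\<Sum>p\<in>R. sg (fst p + snd p) * (k * snd p)) = V + V'"
    unfolding V_def V'_def R_split(1) by (rule sum.union_disjoint[OF finL finL' R_split(2)])
  then have VV: "V' = - V" using R0 by simp
  have X: "(\<Sum>p\<in>L. sg (fst p + snd p) * tv p) = U - V"
  proof -
    have "(\<Sum>p\<in>L. sg (fst p + snd p) * tv p) = (\<Sum>p\<in>L. sg (fst p + snd p) * (h * fst p) - sg (fst p + snd p) * (k * snd p))"
      by (rule sum.cong) (auto simp: tv_def right_diff_distrib)
    then show ?thesis unfolding U_def V_def by (simp add: sum_subtractf)
  qed
  have X4: "4 * (U - V) = - (h - 1) * (k - 1)" using X_val X by simp
  have "2 * (h * T + k * oddpair.T k h) = h * (2 * Ak) + k * (2 * Ah) + 4 * (h * P) + 4 * (k * Q)"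
    unfolding T1 T2 by (simp add: algebra_simps)
  also have "\<dots> = h * (k - 1) + k * (h - 1) + 4 * (U - V)" unfolding A1 A2 hP kQ VV by (simp add: algebra_simps)
  also have "\<dots> = h * k - 1" unfolding X4 by (simp add: algebra_simps)
  finally show ?thesis .
qed

lemma main_recip: "2 * (k * BB + h * oddpair.BB k h) = (h - 1) * (k - 1)"
proof -
  have a: "2 * (k * BB) = 2 * (h * T) - (k - 1)" by (rule BB_form)
  have b: "2 * (h * oddpair.BB k h) = 2 * (k * oddpair.T k h) - (h - 1)"
    by (rule oddpair.BB_form[OF oddpair_swap])
  have "2 * (k * BB + h * oddpair.BB k h) = 2 * (k * BB) + 2 * (h * oddpair.BB k h)" by simp
  also have "\<dots> = 2 * (h * T + k * oddpair.T k h) - (k - 1) - (h - 1)" unfolding a b by simp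
  also have "\<dots> = (h - 1) * (k - 1)" unfolding recip by (simp add: algebra_simps)
  finally show ?thesis .
qed

end

lemma (in oddpair) B1_BB: "B1 h k = BB"
  unfolding B1_def BB_def Let_def sg_def floor_divide_of_int_eq by simp

lemma fib_par: "even (fib (3*m)) \<and> odd (fib (Suc (3*m))) \<and> odd (fib (Suc (Suc (3*m))))"
proof (induction m)
  case 0 then show ?case by simp
next
  case (Suc m)
  have e: "3 * Suc m = Suc (Suc (Suc (3*m)))" by simp
  have f1: "fib (Suc (Suc (Suc (3*m)))) = fib (Suc (Suc (3*m))) + fib (Suc (3*m))" by simp
  have f2: "fib (Suc (Suc (Suc (Suc (3*m))))) = fib (Suc (Suc (Suc (3*m)))) + fib (Suc (Suc (3*m)))" by simp
  have f3: "fib (Suc (Suc (Suc (Suc (Suc (3*m)))))) = fib (Suc (Suc (Suc (Suc (3*m))))) + fib (Suc (Suc (Suc (3*m))))" by simp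
  show ?case unfolding e using Suc f1 f2 f3 by simp
qed

theorem theorem25:
  fixes n :: nat and h k :: int
  assumes "h = int (fib (6*n - 1))" and "k = int (fib (6*n + 1))"
    and "h > 0" and "k > 0" and "gcd h k = 1"
    and "dedekind_sum h k = dedekind_sum k h"
  shows "real_of_int (k * B1 h k + h * B1 k h)
           = real_of_int (h^2 - h - k + k^2) / 2 - real_of_int (h*k) + 1"
proof -
  have n0: "n \<noteq> 0" using assms(1,3) by (cases n) auto
  define p where "p = 6*n - 1"
  have p1: "Suc (Suc p) = 6*n + 1" using n0 by (simp add: p_def)
  have pe: "p = Suc (Suc (3 * (2*n - 1)))" using n0 by (simp add: p_def)
  have hp: "h = int (fib p)" using assms(1) p_def by simp
  have kp: "k = int (fib (Suc (Suc p)))" using assms(2) p1 by simp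
  have hodd: "odd h" unfolding hp pe using fib_par[of "2*n-1"] by simp
  have k1: "6*n + 1 = Suc (3 * (2*n))" by simp
  have kodd: "odd k" unfolding assms(2) k1 using fib_par[of "2*n"] by simp
  have cop: "coprime h k" using assms(5) by (simp add: coprime_iff_gcd_eq_1)
  interpret oddpair h k using assms(3,4) hodd kodd cop by unfold_locales
  have sw: "oddpair k h" by (rule oddpair_swap)
  have M: "2 * (k * B1 h k + h * B1 k h) = (h - 1) * (k - 1)"
    using main_recip B1_BB oddpair.B1_BB[OF sw] by simp
  define b where "b = int (fib (Suc p))"
  have kb: "k = b + h" unfolding kp b_def hp by simp
  have podd: "odd p" using pe n0 by simp
  have cas: "k * h - b^2 = 1"
    using fib_Cassini_int[of p] podd unfolding kp hp b_def by simp
  have F: "h^2 + k^2 - 3*h*k + 1 = 0" using kb cas by algebra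
  have I: "2 * (k * B1 h k + h * B1 k h) = (h^2 - h - k + k^2) - 2 * (h*k) + 2"
    using M F by algebra
  then have "real_of_int (2 * (k * B1 h k + h * B1 k h)) = real_of_int ((h^2 - h - k + k^2) - 2 * (h*k) + 2)"
    by simp
  then show ?thesis by (simp add: field_simps)
qed

end
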